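(* Let $d\ge1$, let $\kappa:[-1,1]\to\mathbb{R}$ be given by $\kappa(t)=\sum_{q\ge 0}\frac{J_q^2}{q!}t^q$ with $J_q\in\mathbb{R}$, $J_q\neq0$ for infinitely many $q$, $\sum_{q\ge1}\frac{|J_q|}{(q-1)!}<\infty$, and $\kappa(1)=1$; let $\kappa_L$ denote the $L$-fold composition of $\kappa$. Assume $\kappa'(1)\le1$, and if $\kappa'(1)=1$ assume moreover that there exist $c\in\mathbb{R}\setminus\{0\}$ and $\rho>1$ with $1-\kappa(t)=\kappa'(1)(1-t)-c(1-t)^{\rho}+o((1-t)^{\rho})$ as $t\to1^-$. Let $v_L=(\kappa'(1))^{-L}$ and $\mathfrak{g}(t)=\lim_{L\to\infty}(\kappa'(1))^{-L}(1-\kappa_L(t))$ if $\kappa'(1)<1$, and $v_L=L^{1/(\rho-1)}$ and $\mathfrak{g}(t)=\lim_{L\to\infty}L^{1/(\rho-1)}(1-\kappa_L(t))$ if $\kappa'(1)=1$ (these limits exist). Then \[ \lim_{L\to\infty}\frac{\int_{-1}^1 v_L(1-\kappa_L(t))(1-t^2)^{\frac d2-1}\,dt}{\int_{-1}^1(1-t^2)^{\frac d2-1}\,dt}=\frac{\int_{-1}^1\mathfrak{g}(t)(1-t^2)^{\frac d2-1}\,dt}{\int_{-1}^1(1-t^2)^{\frac d2-1}\,dt}. \] *)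

theory Defs
  imports "HOL-Analysis.Analysis" "HOL-Library.Landau_Symbols"
begin

definition kappa :: "(nat \<Rightarrow> real) \<Rightarrow> real \<Rightarrow> real" where
  "kappa J t = (\<Sum>q. (J q)\<^sup>2 / fact q * t ^ q)"

definition wgt :: "nat \<Rightarrow> real \<Rightarrow> real" where
  "wgt d t = (1 - t\<^sup>2) powr (real d / 2 - 1)"

end

theory Submission
  imports Defs
begin


lemma ser_basic:
  fixes a :: "nat \<Rightarrow> real" and s :: real
  assumes a0: "\<And>q. 0 \<le> a q" and sa: "summable a" and s: "\<bar>s\<bar> \<le> 1"
  shows "summable (\<lambda>q. a q * s ^ q)" "summable (\<lambda>q. \<bar>a q * s ^ q\<bar>)"
proof -
  have b: "\<bar>a q * s ^ q\<bar> \<le> a q" for q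
    using a0[of q] s by (simp add: abs_mult power_abs power_le_one mult_left_le)
  show "summable (\<lambda>q. \<bar>a q * s ^ q\<bar>)"
    by (rule summable_comparison_test[OF _ sa]) (use b in auto)
  then show "summable (\<lambda>q. a q * s ^ q)" by (rule summable_rabs_cancel)
qed

locale ser =
  fixes a :: "nat \<Rightarrow> real" and K :: "real \<Rightarrow> real"
  assumes a0: "\<And>q. 0 \<le> a q" and sa: "summable a" and sum1: "suminf a = 1"
    and Kdef: "\<And>t. K t = (\<Sum>q. a q * t ^ q)"
begin

lemma Kabs: assumes "s \<in> {-1..1}" shows "\<bar>K s\<bar> \<le> 1"
proof -
  have s: "\<bar>s\<bar> \<le> 1" using assms by auto
  have "\<bar>K s\<bar> \<le> (\<Sum>q. \<bar>a q * s ^ q\<bar>)"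
    unfolding Kdef by (rule summable_rabs[OF ser_basic(2)[OF a0 sa s]])
  also have "\<dots> \<le> suminf a"
    by (rule suminf_le[OF _ ser_basic(2)[OF a0 sa s] sa])
       (use a0 s in \<open>simp add: abs_mult power_abs power_le_one mult_left_le\<close>)
  finally show ?thesis using sum1 by simp
qed

lemma Kdiff: assumes "\<bar>s\<bar> \<le> 1" shows "1 - K s = (\<Sum>q. a q * (1 - s ^ q))"
proof -
  have "1 - K s = suminf a - (\<Sum>q. a q * s ^ q)" using sum1 Kdef by simp
  also have "\<dots> = (\<Sum>q. a q - a q * s ^ q)"
    by (rule suminf_diff[OF sa ser_basic(1)[OF a0 sa assms]])
  finally show ?thesis by (simp add: algebra_simps)
qed

lemma Kr: assumes "-1 \<le> s" "s < 1"
  shows "summable (\<lambda>q. a q * (\<Sum>j<q. s ^ j))"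
    and "(1 - K s) / (1 - s) = (\<Sum>q. a q * (\<Sum>j<q. s ^ j))"
proof -
  have s: "\<bar>s\<bar> \<le> 1" using assms by auto
  have sd: "summable (\<lambda>q. a q * (1 - s ^ q))"
    using summable_diff[OF sa ser_basic(1)[OF a0 sa s]] by (simp add: algebra_simps)
  have eq: "a q * (\<Sum>j<q. s ^ j) = inverse (1 - s) * (a q * (1 - s ^ q))" for q
    using assms by (simp add: one_diff_power_eq field_simps)
  show sm: "summable (\<lambda>q. a q * (\<Sum>j<q. s ^ j))"
    unfolding eq by (rule summable_mult[OF sd])
  have "(\<Sum>q. a q * (\<Sum>j<q. s ^ j)) = inverse (1 - s) * (\<Sum>q. a q * (1 - s ^ q))"
    unfolding eq by (rule suminf_mult[OF sd])
  then show "(1 - K s) / (1 - s) = (\<Sum>q. a q * (\<Sum>j<q. s ^ j))"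
    using Kdiff[OF s] by (simp add: field_simps)
qed

lemma Kmono: assumes "-1 \<le> s" "\<bar>s\<bar> \<le> s'" "s' < 1"
  shows "(1 - K s) / (1 - s) \<le> (1 - K s') / (1 - s')"
proof -
  have s1: "s < 1" using assms by auto
  have s2: "-1 \<le> s'" using assms by auto
  have "a q * (\<Sum>j<q. s ^ j) \<le> a q * (\<Sum>j<q. s' ^ j)" for q
  proof (rule mult_left_mono[OF _ a0])
    show "(\<Sum>j<q. s ^ j) \<le> (\<Sum>j<q. s' ^ j)"
    proof (rule sum_mono)
      fix j
      have "s ^ j \<le> \<bar>s\<bar> ^ j" by (metis abs_ge_self power_abs)
      also have "\<dots> \<le> s' ^ j" by (rule power_mono[OF assms(2)]) simp
      finally show "s ^ j \<le> s' ^ j" .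
    qed
  qed
  then show ?thesis
    unfolding Kr(2)[OF assms(1) s1] Kr(2)[OF s2 assms(3)]
    by (intro suminf_le Kr(1)) (use assms s1 s2 in auto)
qed

lemma Ktwo: assumes "s \<in> {-1..1}" shows "1 - K s \<le> 2 * (1 - K 0)"
proof -
  have s: "\<bar>s\<bar> \<le> 1" using assms by auto
  have sd: "summable (\<lambda>q. a q * (1 - s ^ q))"
    if "\<bar>s\<bar> \<le> 1" for s
    using summable_diff[OF sa ser_basic(1)[OF a0 sa that]] by (simp add: algebra_simps)
  have "(\<Sum>q. a q * (1 - s ^ q)) \<le> (\<Sum>q. 2 * (a q * (1 - 0 ^ q)))"
  proof (rule suminf_le)
    fix q
    show "a q * (1 - s ^ q) \<le> 2 * (a q * (1 - 0 ^ q))"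
    proof (cases q)
      case 0 then show ?thesis by simp
    next
      case (Suc m)
      have "\<bar>s ^ q\<bar> \<le> 1" using s by (simp add: power_abs power_le_one)
      then have "1 - s ^ q \<le> 2" by linarith
      then have "a q * (1 - s ^ q) \<le> a q * 2" by (rule mult_left_mono[OF _ a0])
      then show ?thesis using Suc by simp
    qed
  qed (use sd[OF s] sd[of 0] summable_mult in auto)
  also have "\<dots> = 2 * (\<Sum>q. a q * (1 - 0 ^ q))"
    by (rule suminf_mult[OF sd]) simp
  finally show ?thesis using Kdiff[OF s] Kdiff[of 0] by simp
qed

lemma Kcont: "continuous_on {-1..1} K"
proof -
  have "uniform_limit {-1..1} (\<lambda>n x. \<Sum>i<n. a i * x ^ i) (\<lambda>x. \<Sum>i. a i * x ^ i) sequentially"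
    by (rule Weierstrass_m_test[OF _ sa])
       (use a0 in \<open>auto simp: abs_mult power_abs power_le_one mult_left_le\<close>)
  moreover have "(\<lambda>x. \<Sum>i. a i * x ^ i) = K" using Kdef by auto
  ultimately have "uniform_limit {-1..1} (\<lambda>n x. \<Sum>i<n. a i * x ^ i) K sequentially" by simp
  then show ?thesis
    by (rule uniform_limit_theorem[rotated]) (auto intro!: continuous_intros always_eventually)
qed

lemma Kle: assumes K1: "K 1 = 1" and deriv: "(K has_real_derivative k) (at 1 within {-1..1})"
  and s: "s \<in> {-1..1}"
  shows "1 - K s \<le> k * (1 - s)"
proof -
  have lim: "((\<lambda>y. (K y - K 1) / (y - 1)) \<longlongrightarrow> k) (at_left 1)"
    using deriv unfolding has_field_derivative_iff at_within_Icc_at_left[of "-1::real" 1, simplified] .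
  have rle: "(1 - K s) / (1 - s) \<le> k" if s: "-1 < s" "s < 1" for s
  proof (rule tendsto_lowerbound[OF lim])
    have "eventually (\<lambda>y. y \<in> {\<bar>s\<bar><..<1}) (at_left (1::real))"
      by (rule eventually_at_left_real) (use s in auto)
    then show "\<forall>\<^sub>F y in at_left 1. (1 - K s) / (1 - s) \<le> (K y - K 1) / (y - 1)"
    proof eventually_elim
      case (elim y)
      then have "(1 - K s) / (1 - s) \<le> (1 - K y) / (1 - y)"
        using s by (intro Kmono) auto
      also have "\<dots> = (K y - K 1) / (y - 1)" using K1
        by (metis minus_diff_eq minus_divide_divide)
      finally show ?case .
    qed
  qed simp
  have main: "1 - K s \<le> k * (1 - s)" if s: "-1 < s" "s < 1" for s
    using rle[OF s] s by (simp add: field_simps)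
  show ?thesis
  proof (cases "s = -1 \<or> s = 1")
    case False then show ?thesis using s main by auto
  next
    case True
    then show ?thesis
    proof
      assume "s = 1" then show ?thesis using K1 by simp
    next
      assume sm: "s = -1"
      have "(K \<longlongrightarrow> K (-1)) (at (-1) within {-1..1})"
        using Kcont by (simp add: continuous_on_def)
      then have "(K \<longlongrightarrow> K (-1)) (at_right (-1))"
        using at_within_Icc_at_right[of "-1::real" 1] by simp
      then have l2: "((\<lambda>y. k * (1 - y) - (1 - K y)) \<longlongrightarrow> k * (1 - (-1)) - (1 - K (-1))) (at_right (-1))"
        by (intro tendsto_intros)
      have "0 \<le> k * (1 - (-1)) - (1 - K (-1))"
      proof (rule tendsto_lowerbound[OF l2])
        have "eventually (\<lambda>y. y \<in> {-1<..<1}) (at_right (-1::real))"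
          by (rule eventually_at_right_real) auto
        then show "\<forall>\<^sub>F y in at_right (- 1). 0 \<le> k * (1 - y) - (1 - K y)"
          by eventually_elim (use main in auto)
      qed simp
      then show ?thesis using sm by simp
    qed
  qed
qed

end



lemma summable_from_deriv:
  fixes a :: "nat \<Rightarrow> real" and K :: "real \<Rightarrow> real"
  assumes a0: "\<And>q. 0 \<le> a q" and Kdef: "\<And>t. K t = (\<Sum>q. a q * t ^ q)"
    and K1: "K 1 = 1" and deriv: "(K has_real_derivative k) (at 1 within {-1..1})"
    and k0: "k \<noteq> 0"
  shows "summable a"
proof (rule ccontr)
  assume ns: "\<not> summable a"
  have lim: "((\<lambda>y. (K y - K 1) / (y - 1)) \<longlongrightarrow> k) (at_left 1)"
    using deriv unfolding has_field_derivative_iff at_within_Icc_at_left[of "-1::real" 1, simplified] .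
  show False
  proof (cases "\<exists>t0\<in>{0<..<1}. \<not> summable (\<lambda>q. a q * t0 ^ q)")
    case True
    then obtain t0 where t0: "0 < t0" "t0 < 1" "\<not> summable (\<lambda>q. a q * t0 ^ q)" by auto
    have Keq: "K t = K 1" if t: "t0 \<le> t" for t
    proof -
      have "\<not> summable (\<lambda>q. a q * t ^ q)"
      proof
        assume "summable (\<lambda>q. a q * t ^ q)"
        moreover have "norm (a q * t0 ^ q) \<le> a q * t ^ q" for q
          using t t0 a0[of q] by (auto intro!: mult_left_mono power_mono simp: abs_mult)
        ultimately have "summable (\<lambda>q. a q * t0 ^ q)"
          using summable_comparison_test'[of "\<lambda>q. a q * t ^ q" 0 "\<lambda>q. a q * t0 ^ q"] by blast
        then show False using t0 by simp
      qed
      then have e1: "(\<lambda>s. (\<lambda>q. a q * t ^ q) sums s) = (\<lambda>s. False)"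
        by (auto simp: sums_iff)
      have e2: "(\<lambda>s. (\<lambda>q. a q * 1 ^ q) sums s) = (\<lambda>s. False)"
        using ns by (auto simp: sums_iff)
      show ?thesis unfolding Kdef suminf_def e1 e2 ..
    qed
    have "((\<lambda>y. (K y - K 1) / (y - 1)) \<longlongrightarrow> 0) (at_left 1)"
    proof (rule tendsto_eventually)
      have "eventually (\<lambda>y. y \<in> {t0<..<1}) (at_left (1::real))"
        by (rule eventually_at_left_real) (use t0 in auto)
      then show "\<forall>\<^sub>F y in at_left 1. (K y - K 1) / (y - 1) = 0"
      proof eventually_elim
        case (elim y)
        then have "K y = K 1" by (intro Keq) auto
        then show ?case by simp
      qed
    qed
    from tendsto_unique[OF _ lim this] k0 show False by simp
  next
    case False
    then have sm: "summable (\<lambda>q. a q * t ^ q)" if "0 < t" "t < 1" for t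
      using that by auto
    have "\<exists>n. (\<Sum>k\<le>n. a k) > 2"
    proof (rule ccontr)
      assume "\<not> ?thesis"
      then have "summable a" by (intro bounded_imp_summable[of _ 2]) (use a0 in \<open>auto simp: not_less\<close>)
      then show False using ns by simp
    qed
    then obtain n where n: "(\<Sum>k\<le>n. a k) > 2" by auto
    have "continuous (at 1 within {-1..1}) K" by (rule DERIV_continuous[OF deriv])
    then have cK: "(K \<longlongrightarrow> 1) (at_left 1)"
      using K1 at_within_Icc_at_left[of "-1::real" 1] by (simp add: continuous_within)
    have cP: "((\<lambda>t. \<Sum>k\<le>n. a k * t ^ k) \<longlongrightarrow> (\<Sum>k\<le>n. a k * 1 ^ k)) (at_left 1)"
      by (intro tendsto_intros)
    have e1: "eventually (\<lambda>t. K t < 3/2) (at_left (1::real))"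
      using order_tendstoD(2)[OF cK, of "3/2"] by simp
    have e2: "eventually (\<lambda>t. (\<Sum>k\<le>n. a k * t ^ k) > 2) (at_left (1::real))"
      using order_tendstoD(1)[OF cP, of 2] n by simp
    have e3: "eventually (\<lambda>t. t \<in> {0<..<1}) (at_left (1::real))"
      by (rule eventually_at_left_real) auto
    have "eventually (\<lambda>t. False) (at_left (1::real))"
      using e1 e2 e3
    proof eventually_elim
      case (elim t)
      have "(\<Sum>k\<le>n. a k * t ^ k) \<le> K t"
        unfolding Kdef by (rule sum_le_suminf[OF sm]) (use elim a0 in auto)
      then show False using elim by simp
    qed
    then show False by simp
  qed
qed



lemma iter_range:
  fixes K :: "real \<Rightarrow> real"
  assumes Kb: "\<And>s. s \<in> {-1..1} \<Longrightarrow> \<bar>K s\<bar> \<le> (1::real)" and t: "t \<in> {-1..1}"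
  shows "(K ^^ n) t \<in> {-1..1}"
proof (induction n)
  case 0 then show ?case using t by simp
next
  case (Suc n)
  have "\<bar>K ((K ^^ n) t)\<bar> \<le> 1" by (rule Kb[OF Suc])
  then show ?case by (auto simp: abs_le_iff)
qed

lemma subcrit:
  fixes K :: "real \<Rightarrow> real" and k t :: real
  assumes Kb: "\<And>s. s \<in> {-1..1} \<Longrightarrow> \<bar>K s\<bar> \<le> 1"
    and Kl: "\<And>s. s \<in> {-1..1} \<Longrightarrow> 1 - K s \<le> k * (1 - s)"
    and k0: "0 \<le> k" and t: "t \<in> {-1..1}"
  shows "0 \<le> inverse (k ^ L) * (1 - (K ^^ L) t)"
    and "inverse (k ^ L) * (1 - (K ^^ L) t) \<le> 2"
    and "convergent (\<lambda>L. inverse (k ^ L) * (1 - (K ^^ L) t))"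
proof -
  define x where "x = (\<lambda>L. inverse (k ^ L) * (1 - (K ^^ L) t))"
  have r: "(K ^^ n) t \<in> {-1..1}" for n by (rule iter_range[OF Kb t])
  have nn: "0 \<le> x L" for L
    unfolding x_def using r[of L] k0 by (auto intro!: mult_nonneg_nonneg)
  have dec: "x (Suc L) \<le> x L" for L
  proof (cases "k = 0")
    case True then show ?thesis using nn[of L] by (simp add: x_def)
  next
    case False
    then have kp: "k > 0" using k0 by simp
    have "1 - K ((K ^^ L) t) \<le> k * (1 - (K ^^ L) t)" by (rule Kl[OF r])
    then have "inverse (k ^ Suc L) * (1 - K ((K ^^ L) t)) \<le> inverse (k ^ Suc L) * (k * (1 - (K ^^ L) t))"
      by (rule mult_left_mono) (use kp in simp)
    also have "\<dots> = x L" using kp by (simp add: x_def field_simps)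
    finally show ?thesis by (simp add: x_def)
  qed
  have xle0: "x L \<le> x 0" for L
    by (induction L) (use dec order_trans in blast)+
  have le2: "x L \<le> 2" for L
  proof -
    have "x L \<le> x 0" by (rule xle0)
    also have "x 0 = 1 - t" by (simp add: x_def)
    finally show ?thesis using t by simp
  qed
  have "decseq x" using dec by (simp add: decseq_SucI)
  then obtain l where "x \<longlonglongrightarrow> l" using decseq_convergent[of x 0] nn by blast
  then have "convergent x" by (auto simp: convergent_def)
  then show "convergent (\<lambda>L. inverse (k ^ L) * (1 - (K ^^ L) t))" by (simp add: x_def)
  show "0 \<le> inverse (k ^ L) * (1 - (K ^^ L) t)" using nn by (simp add: x_def)
  show "inverse (k ^ L) * (1 - (K ^^ L) t) \<le> 2" using le2 by (simp add: x_def)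
qed

lemma bern:
  fixes x g :: real
  assumes "0 \<le> x" "x < 1" "0 < g"
  shows "1 + g * x \<le> (1 - x) powr (-g)"
proof -
  have "ln (1 - x) \<le> (1 - x) - 1" by (rule ln_le_minus_one) (use assms in simp)
  then have "g * ln (1 - x) \<le> g * (- x)" using assms by (intro mult_left_mono) auto
  then have "g * x \<le> - g * ln (1 - x)" by simp
  also have "1 + - g * ln (1 - x) \<le> exp (- g * ln (1 - x))" by (rule exp_ge_add_one_self)
  finally have "1 + g * x \<le> exp (- g * ln (1 - x))" by simp
  also have "\<dots> = (1 - x) powr (-g)" using assms by (simp add: powr_def)
  finally show ?thesis .
qed

lemma wstep:
  fixes u u' a \<rho> :: real
  assumes u': "0 < u'" and u: "0 < u" and le: "u' \<le> u - a * u powr \<rho>" and a: "0 < a" and r: "1 < \<rho>"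
  shows "u powr (-(\<rho>-1)) + a * (\<rho>-1) \<le> u' powr (-(\<rho>-1))"
proof -
  define x where "x = a * u powr (\<rho> - 1)"
  have up: "u powr \<rho> = u * u powr (\<rho> - 1)"
  proof -
    have "u powr \<rho> = u powr (1 + (\<rho> - 1))" by simp
    also have "\<dots> = u powr 1 * u powr (\<rho> - 1)" by (rule powr_add)
    finally show ?thesis using u by simp
  qed
  have le2: "u' \<le> u * (1 - x)" using le up by (simp add: x_def algebra_simps)
  have x0: "0 \<le> x" using a u by (simp add: x_def)
  have x1: "x < 1"
  proof (rule ccontr)
    assume "\<not> x < 1"
    then have "u * (1 - x) \<le> 0" using u by (simp add: mult_nonneg_nonpos)
    then show False using le2 u' by simp
  qed
  have uu: "u powr (-(\<rho>-1)) * u powr (\<rho> - 1) = 1"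
    using u by (simp add: powr_add[symmetric])
  have "u powr (-(\<rho>-1)) + a * (\<rho>-1) = u powr (-(\<rho>-1)) + a * (\<rho>-1) * (u powr (-(\<rho>-1)) * u powr (\<rho> - 1))"
    using uu by simp
  also have "\<dots> = u powr (-(\<rho>-1)) * (1 + (\<rho> - 1) * x)"
    by (simp add: x_def algebra_simps)
  also have "\<dots> \<le> u powr (-(\<rho>-1)) * (1 - x) powr (-(\<rho>-1))"
    by (rule mult_left_mono[OF bern]) (use x0 x1 r in auto)
  also have "\<dots> = (u * (1 - x)) powr (-(\<rho>-1))"
    by (rule powr_mult[symmetric])
  also have "\<dots> \<le> u' powr (-(\<rho>-1))"
    by (rule powr_mono2') (use r u' le2 in auto)
  finally show ?thesis .
qed

lemma stolz:
  fixes w :: "nat \<Rightarrow> real"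
  assumes d: "(\<lambda>n. w (Suc n) - w n) \<longlonglongrightarrow> l"
  shows "(\<lambda>n. w n / real n) \<longlonglongrightarrow> l"
proof (rule LIMSEQ_I)
  fix e :: real assume e: "0 < e"
  obtain N where N: "\<And>n. n \<ge> N \<Longrightarrow> \<bar>w (Suc n) - w n - l\<bar> < e / 2"
    using LIMSEQ_D[OF d, of "e/2"] e by auto
  define A where "A = \<bar>w N - real N * l\<bar>"
  have bnd: "\<bar>w n - real n * l\<bar> \<le> A + (real n - real N) * (e / 2)" if "N \<le> n" for n
    using that
  proof (induction n rule: dec_induct)
    case base then show ?case by (simp add: A_def)
  next
    case (step n)
    have "\<bar>w (Suc n) - real (Suc n) * l\<bar> \<le> \<bar>w n - real n * l\<bar> + \<bar>w (Suc n) - w n - l\<bar>"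
      by (simp add: algebra_simps)
    also have "\<dots> \<le> A + (real n - real N) * (e / 2) + e / 2"
      using step N[of n] by simp
    also have "\<dots> = A + (real (Suc n) - real N) * (e / 2)" by (simp add: field_simps)
    finally show ?case .
  qed
  obtain M :: nat where M: "M > max N (2 * A / e)" by (meson reals_Archimedean2)
  show "\<exists>no. \<forall>n\<ge>no. norm (w n / real n - l) < e"
  proof (intro exI allI impI)
    fix n assume n: "M \<le> n"
    then have nN: "N \<le> n" and npos: "real n > 0" and nA: "real n > 2 * A / e" using M by auto
    have "norm (w n / real n - l) = \<bar>w n - real n * l\<bar> / real n"
      using npos by (simp add: field_simps abs_divide)
    also have "\<dots> \<le> (A + (real n - real N) * (e / 2)) / real n"
      by (rule divide_right_mono[OF bnd[OF nN]]) simp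
    also have "\<dots> \<le> (A + real n * (e / 2)) / real n"
      by (rule divide_right_mono) (use e in auto)
    also have "\<dots> = A / real n + e / 2" using npos by (simp add: field_simps)
    also have "A / real n < e / 2" using nA e npos by (simp add: field_simps)
    finally show "norm (w n / real n - l) < e" by simp
  qed
qed



lemma critlim:
  fixes u E :: "nat \<Rightarrow> real" and c \<rho> :: real
  assumes up: "\<And>n. 0 < u n" and u0: "u \<longlonglongrightarrow> 0"
    and rec: "\<And>n. u (Suc n) = u n - c * u n powr \<rho> + E n"
    and Eo: "(\<lambda>n. E n / u n powr \<rho>) \<longlonglongrightarrow> 0" and c: "0 < c" and r: "1 < \<rho>"
  shows "(\<lambda>n. real n powr (1 / (\<rho> - 1)) * u n) \<longlonglongrightarrow> (c * (\<rho> - 1)) powr (- (1 / (\<rho> - 1)))"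
proof -
  define g where "g = \<rho> - 1"
  have g: "0 < g" using r by (simp add: g_def)
  define ep where "ep n = E n / u n powr \<rho>" for n
  define z where "z n = u n powr g * (c - ep n)" for n
  have upr: "u n powr \<rho> = u n * u n powr g" for n
  proof -
    have "u n powr \<rho> = u n powr (1 + g)" by (simp add: g_def)
    also have "\<dots> = u n powr 1 * u n powr g" by (rule powr_add)
    finally show ?thesis using up[of n] by simp
  qed
  have En: "E n = ep n * u n powr \<rho>" for n
    using up[of n] by (simp add: ep_def)
  have us: "u (Suc n) = u n * (1 - z n)" for n
    unfolding rec En upr z_def by (simp add: algebra_simps)
  have z1: "0 < 1 - z n" for n
    using us[of n] up[of n] up[of "Suc n"] by (metis zero_less_mult_pos)
  have ug: "(\<lambda>n. u n powr g) \<longlonglongrightarrow> 0"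
    by (rule tendsto_zero_powrI[OF u0 tendsto_const]) (use up g in \<open>auto intro!: always_eventually less_imp_le\<close>)
  have ept: "ep \<longlonglongrightarrow> 0" using Eo by (simp add: ep_def[abs_def])
  have zt: "z \<longlonglongrightarrow> 0"
    using tendsto_mult[OF ug tendsto_diff[OF tendsto_const[of c] ept]] by (simp add: z_def[abs_def])
  have epc: "eventually (\<lambda>n. ep n < c) sequentially"
    using order_tendstoD(2)[OF ept c] .
  have zne: "eventually (\<lambda>n. z n \<noteq> 0) sequentially"
    using epc
  proof eventually_elim
    case (elim n)
    have "0 < u n powr g" using up[of n] by simp
    then show ?case using elim by (simp add: z_def)
  qed
  define w where "w n = u n powr (-g)" for n
  define F where "F y = (1 - y) powr (-g)" for y :: real
  have wS: "w (Suc n) = w n * F (z n)" for n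
    unfolding w_def F_def us by (rule powr_mult)
  have wz: "w n * z n = c - ep n" for n
  proof -
    have "u n powr (-g) * u n powr g = 1" using up[of n] by (simp add: powr_add[symmetric])
    then show ?thesis by (simp add: w_def z_def algebra_simps)
  qed
  have D1: "(F has_real_derivative (-g) * (1 - 0) powr (-g - of_nat 1) * (-1)) (at 0)"
    unfolding F_def by (rule DERIV_fun_powr) (auto intro!: derivative_eq_intros)
  have "(-g) * (1 - 0) powr (-g - of_nat 1) * (-1) = g" by simp
  then have D: "(F has_real_derivative g) (at 0)" using D1 by simp
  have Ql: "((\<lambda>y. (F y - F 0) / (y - 0)) \<longlongrightarrow> g) (at 0)"
    using D by (simp add: has_field_derivative_iff)
  have fz: "filterlim z (at 0) sequentially" by (rule filterlim_atI[OF zt zne])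
  have Qz: "(\<lambda>n. (F (z n) - F 0) / (z n - 0)) \<longlonglongrightarrow> g"
    by (rule filterlim_compose[OF Ql fz])
  have dl: "(\<lambda>n. (c - ep n) * ((F (z n) - F 0) / (z n - 0))) \<longlonglongrightarrow> (c - 0) * g"
    by (intro tendsto_intros ept Qz)
  have F0: "F 0 = 1" by (simp add: F_def)
  have "(\<lambda>n. w (Suc n) - w n) \<longlonglongrightarrow> c * g"
  proof -
    have "eventually (\<lambda>n. (c - ep n) * ((F (z n) - F 0) / (z n - 0)) = w (Suc n) - w n) sequentially"
      using zne
    proof eventually_elim
      case (elim n)
      have "(c - ep n) * ((F (z n) - F 0) / (z n - 0)) = w n * z n * ((F (z n) - 1) / z n)"
        by (simp add: wz F0)
      also have "\<dots> = w n * (F (z n) - 1)" using elim by simp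
      also have "\<dots> = w (Suc n) - w n" by (simp add: wS algebra_simps)
      finally show ?case .
    qed
    then show ?thesis using dl by (simp add: tendsto_cong)
  qed
  then have st: "(\<lambda>n. w n / real n) \<longlonglongrightarrow> c * g" by (rule stolz)
  have lim: "(\<lambda>n. (w n / real n) powr (- (1 / g))) \<longlonglongrightarrow> (c * g) powr (- (1 / g))"
    by (rule tendsto_powr[OF st tendsto_const]) (use c g in simp)
  have "eventually (\<lambda>n. (w n / real n) powr (- (1 / g)) = real n powr (1 / g) * u n) sequentially"
    using eventually_gt_at_top[of 0]
  proof eventually_elim
    case (elim n)
    have "(w n / real n) powr (- (1 / g)) = w n powr (- (1 / g)) / real n powr (- (1 / g))"
      by (rule powr_divide)
    also have "w n powr (- (1 / g)) = u n powr ((-g) * (- (1 / g)))"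
      by (simp add: w_def powr_powr)
    also have "(-g) * (- (1 / g)) = 1" using g by simp
    also have "u n powr 1 = u n" using up[of n] by simp
    also have "u n / real n powr (- (1 / g)) = real n powr (1 / g) * u n"
      by (simp add: powr_minus divide_inverse)
    finally show ?case .
  qed
  then show ?thesis using lim by (simp add: tendsto_cong g_def)
qed



lemma crit_main:
  fixes K :: "real \<Rightarrow> real" and c \<rho> :: real
  assumes Kb: "\<And>s. s \<in> {-1..1} \<Longrightarrow> \<bar>K s\<bar> \<le> 1"
    and Kl: "\<And>s. s \<in> {-1..1} \<Longrightarrow> 1 - K s \<le> 1 * (1 - s)"
    and Km: "\<And>s s'. -1 \<le> s \<Longrightarrow> \<bar>s\<bar> \<le> s' \<Longrightarrow> s' < 1 \<Longrightarrow> (1 - K s) / (1 - s) \<le> (1 - K s') / (1 - s')"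
    and K2: "\<And>s. s \<in> {-1..1} \<Longrightarrow> 1 - K s \<le> 2 * (1 - K 0)"
    and c0: "c \<noteq> 0" and r: "1 < \<rho>"
    and o: "(\<lambda>t. (1 - K t) - (1 * (1 - t) - c * (1 - t) powr \<rho>)) \<in> o[at_left 1](\<lambda>t. (1 - t) powr \<rho>)"
  shows "\<exists>C. \<forall>L t. t \<in> {-1..1} \<longrightarrow> \<bar>real L powr (1 / (\<rho> - 1)) * (1 - (K ^^ L) t)\<bar> \<le> C"
    and "\<forall>t\<in>{-1..1}. convergent (\<lambda>L. real L powr (1 / (\<rho> - 1)) * (1 - (K ^^ L) t))"
proof -
  define E where "E t = (1 - K t) - (1 * (1 - t) - c * (1 - t) powr \<rho>)" for t
  have o': "E \<in> o[at_left 1](\<lambda>t. (1 - t) powr \<rho>)" unfolding E_def by (rule o)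
  define g where "g = \<rho> - 1"
  define \<beta> where "\<beta> = 1 / g"
  have g: "0 < g" using r by (simp add: g_def)
  have \<beta>: "0 < \<beta>" using g by (simp add: \<beta>_def)
  have gb: "g * \<beta> = 1" using g by (simp add: \<beta>_def)
  have ev: "eventually (\<lambda>y. norm (E y) \<le> (\<bar>c\<bar>/2) * norm ((1 - y) powr \<rho>)) (at_left (1::real))"
    by (rule landau_o.smallD[OF o']) (use c0 in simp)
  then obtain b where b: "b < 1" and hb0: "\<And>y. b < y \<Longrightarrow> y < 1 \<Longrightarrow> \<bar>E y\<bar> \<le> (\<bar>c\<bar>/2) * (1 - y) powr \<rho>"
    unfolding eventually_at_left[of 0 "1::real", simplified] by auto
  define b0 where "b0 = max b 0"
  have b0: "0 \<le> b0" "b0 < 1" using b by (auto simp: b0_def)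
  have hb: "\<bar>E y\<bar> \<le> (\<bar>c\<bar>/2) * (1 - y) powr \<rho>" if "b0 < y" "y < 1" for y
    using hb0[of y] that by (auto simp: b0_def)
  have cpos: "0 < c"
  proof -
    define y1 where "y1 = (1 + b0) / 2"
    have y1: "b0 < y1" "y1 < 1" "y1 \<in> {-1..1}" using b0 by (auto simp: y1_def)
    define P where "P = (1 - y1) powr \<rho>"
    have P: "0 < P" using y1 by (simp add: P_def)
    have "E y1 \<le> c * P" using Kl[OF y1(3)] by (simp add: E_def P_def)
    moreover have "- E y1 \<le> (\<bar>c\<bar>/2) * P" using hb[OF y1(1,2)] by (simp add: P_def)
    ultimately have "0 \<le> (c + \<bar>c\<bar>/2) * P" by (simp add: algebra_simps)
    then have "0 \<le> c + \<bar>c\<bar>/2" using P by (simp add: zero_le_mult_iff)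
    then show ?thesis using c0 by (cases "c < 0") auto
  qed
  define a where "a = c / 2"
  have a: "0 < a" using cpos by (simp add: a_def)
  have near: "1 - K y \<le> (1 - y) - a * (1 - y) powr \<rho>" if "b0 < y" "y < 1" for y
  proof -
    have "E y \<le> (c/2) * (1 - y) powr \<rho>" using hb[OF that] abs_ge_self[of "E y"] cpos by simp
    then show ?thesis by (simp add: E_def a_def)
  qed
  have rlt: "(1 - K y) / (1 - y) < 1" if "b0 < y" "y < 1" for y
  proof -
    have "0 < a * (1 - y) powr \<rho>" using a that by simp
    then have "1 - K y < 1 - y" using near[OF that] by simp
    then show ?thesis using that by simp
  qed
  define s1 where "s1 = (1 + b0) / 2"
  have s1: "b0 < s1" "s1 < 1" "0 \<le> s1" using b0 by (auto simp: s1_def)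
  define \<theta>0 where "\<theta>0 = 1 - K 0"
  have "(1 - K 0) / (1 - 0) \<le> (1 - K s1) / (1 - s1)" by (rule Km) (use s1 in auto)
  then have th0: "\<theta>0 < 1" using rlt[OF s1(1,2)] by (simp add: \<theta>0_def)
  define ss where "ss = max s1 (2 * \<theta>0 - 1)"
  have ss: "ss < 1" "b0 < ss" "0 \<le> ss" "2 * \<theta>0 - 1 \<le> ss" using s1 th0 by (auto simp: ss_def)
  define \<theta> where "\<theta> = (1 - K ss) / (1 - ss)"
  have th: "\<theta> < 1" using rlt[OF ss(2,1)] by (simp add: \<theta>_def)
  have th_nn: "0 \<le> \<theta>"
  proof -
    have "K ss \<le> 1" using Kb[of ss] ss by (auto simp: abs_le_iff)
    then show ?thesis using ss by (simp add: \<theta>_def)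
  qed
  define \<delta> where "\<delta> = 1 - ss"
  have \<delta>: "0 < \<delta>" "\<delta> < 1 - b0" using ss by (auto simp: \<delta>_def)
  define u where "u t n = 1 - (K ^^ n) t" for t n
  have R: "(K ^^ n) t \<in> {-1..1}" if "t \<in> {-1..1}" for t n by (rule iter_range[OF Kb that])
  have uS: "u t (Suc n) = 1 - K ((K ^^ n) t)" for t n by (simp add: u_def)
  have u_nn: "0 \<le> u t n" if "t \<in> {-1..1}" for t n using R[OF that, of n] by (simp add: u_def)
  have u_le2: "u t n \<le> 2" if "t \<in> {-1..1}" for t n using R[OF that, of n] by (simp add: u_def)
  have u_dec: "u t (Suc n) \<le> u t n" if "t \<in> {-1..1}" for t n
    using Kl[OF R[OF that, of n]] by (simp add: u_def)
  have s_lb: "- ss \<le> (K ^^ n) t" if t1: "t \<in> {-1..1}" and n1: "1 \<le> n" for t n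
  proof -
    obtain m where m: "n = Suc m" using n1 by (cases n) auto
    have "1 - K ((K ^^ m) t) \<le> 2 * \<theta>0" using K2[OF R[OF t1]] by (simp add: \<theta>0_def)
    then show ?thesis using ss(4) m by simp
  qed
  have claimE: "u t n \<le> max \<delta> (2 * \<theta> ^ (n - 1))" if t: "t \<in> {-1..1}" and n: "1 \<le> n" for t n
    using n
  proof (induction n rule: dec_induct)
    case base
    then show ?case using u_le2[OF t, of 1] by simp
  next
    case (step n)
    show ?case
    proof (cases "u t n \<le> \<delta>")
      case True then show ?thesis using u_dec[OF t, of n] by simp
    next
      case False
      define s where "s = (K ^^ n) t"
      have sR: "s \<in> {-1..1}" using R[OF t] by (simp add: s_def)
      have s_lt: "s < ss" using False by (simp add: u_def s_def \<delta>_def)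
      have s_ge: "- ss \<le> s" using s_lb[OF t step(1)] by (simp add: s_def)
      have "(1 - K s) / (1 - s) \<le> \<theta>" unfolding \<theta>_def
        by (rule Km) (use sR s_lt s_ge ss in auto)
      moreover have pos: "0 < 1 - s" using s_lt ss by simp
      ultimately have "1 - K s \<le> \<theta> * (1 - s)" by (simp add: field_simps)
      moreover have "1 - s \<le> 2 * \<theta> ^ (n - 1)" using step(3) False by (simp add: u_def s_def)
      ultimately have "1 - K s \<le> \<theta> * (2 * \<theta> ^ (n - 1))"
        using th_nn by (meson mult_left_mono order_trans)
      also have "\<theta> * (2 * \<theta> ^ (n - 1)) = 2 * \<theta> ^ (Suc n - 1)"
        using step(1) by (cases n) auto
      finally show ?thesis by (simp add: uS s_def)
    qed
  qed
  have "(\<lambda>n. 2 * \<theta> ^ n) \<longlonglongrightarrow> 2 * 0"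
    by (intro tendsto_intros) (use th th_nn in simp)
  then have "eventually (\<lambda>n. 2 * \<theta> ^ n < \<delta>) sequentially"
    using order_tendstoD(2)[of "\<lambda>n. 2 * \<theta> ^ n" "2 * 0" sequentially \<delta>] \<delta>(1) by simp
  then obtain m where m: "\<And>n. m \<le> n \<Longrightarrow> 2 * \<theta> ^ n < \<delta>"
    unfolding eventually_sequentially by auto
  define N0 where "N0 = Suc m"
  have N0: "1 \<le> N0" by (simp add: N0_def)
  have uN: "u t n \<le> \<delta>" if t: "t \<in> {-1..1}" and n: "N0 \<le> n" for t n
  proof -
    have "2 * \<theta> ^ (n - 1) < \<delta>" using m[of "n - 1"] n by (simp add: N0_def)
    then show ?thesis using claimE[OF t, of n] n N0 by simp
  qed
  have decay: "u t (Suc n) \<le> u t n - a * u t n powr \<rho>"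
    if t: "t \<in> {-1..1}" and n: "N0 \<le> n" and pos: "0 < u t (Suc n)" for t n
  proof -
    have "0 < u t n" using pos u_dec[OF t, of n] by simp
    then have "(K ^^ n) t < 1" "b0 < (K ^^ n) t" using uN[OF t n] \<delta> by (auto simp: u_def)
    from near[OF this(2,1)] show ?thesis by (simp add: uS u_def)
  qed
  have wb: "real (n - N0) * (a * g) \<le> u t n powr (- g)"
    if t: "t \<in> {-1..1}" and n: "N0 \<le> n" and pos: "0 < u t n" for t n
    using n pos
  proof (induction n rule: dec_induct)
    case base then show ?case by simp
  next
    case (step n)
    have pn: "0 < u t n" using step(4) u_dec[OF t, of n] by simp
    have "u t n powr (-(\<rho>-1)) + a * (\<rho>-1) \<le> u t (Suc n) powr (-(\<rho>-1))"
      by (rule wstep[OF step(4) pn decay[OF t step(1) step(4)] a r])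
    then have "u t n powr (- g) + a * g \<le> u t (Suc n) powr (- g)" by (simp add: g_def)
    moreover have "real (Suc n - N0) = real (n - N0) + 1" using step(1) by (simp add: Suc_diff_le)
    ultimately show ?case using step(3)[OF pn] by (simp add: algebra_simps)
  qed
  have ub: "u t n \<le> (real (n - N0) * (a * g)) powr (- \<beta>)"
    if t: "t \<in> {-1..1}" and n: "N0 < n" and pos: "0 < u t n" for t n
  proof -
    have A: "0 < real (n - N0) * (a * g)" using n a g by simp
    have "u t n = (u t n powr (- g)) powr (- \<beta>)" using pos gb by (simp add: powr_powr)
    also have "\<dots> \<le> (real (n - N0) * (a * g)) powr (- \<beta>)"
      by (rule powr_mono2') (use \<beta> A wb[OF t _ pos] n in auto)
    finally show ?thesis .
  qed
  define C where "C = max (2 * real (2 * N0) powr \<beta>) ((a * g / 2) powr (- \<beta>))"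
  have C0: "0 \<le> C" by (simp add: C_def le_max_iff_disj)
  have bound: "\<bar>real n powr \<beta> * u t n\<bar> \<le> C" if t: "t \<in> {-1..1}" for t n
  proof -
    have nn: "0 \<le> real n powr \<beta> * u t n" using u_nn[OF t] by simp
    have "real n powr \<beta> * u t n \<le> C"
    proof (cases "u t n = 0")
      case True then show ?thesis using C0 by simp
    next
      case False
      then have pos: "0 < u t n" using u_nn[OF t, of n] by simp
      show ?thesis
      proof (cases "n < 2 * N0")
        case True
        have "real n powr \<beta> \<le> real (2 * N0) powr \<beta>"
          by (rule powr_mono2) (use True \<beta> in auto)
        then have "real n powr \<beta> * u t n \<le> real (2 * N0) powr \<beta> * 2"
          using u_le2[OF t, of n] u_nn[OF t, of n] by (intro mult_mono) auto
        then show ?thesis by (simp add: C_def)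
      next
        case False
        then have n2: "2 * N0 \<le> n" by simp
        then have nN: "N0 < n" using N0 by simp
        have np: "0 < real n" using nN by simp
        have half: "real n / 2 \<le> real (n - N0)" using n2 by (simp add: of_nat_diff)
        have "u t n \<le> (real (n - N0) * (a * g)) powr (- \<beta>)" by (rule ub[OF t nN pos])
        also have "\<dots> \<le> (real n * (a * g / 2)) powr (- \<beta>)"
        proof (rule powr_mono2')
          show "0 < real n * (a * g / 2)" using np a g by simp
          show "real n * (a * g / 2) \<le> real (n - N0) * (a * g)"
            using half a g by (simp add: mult_right_mono field_simps)
        qed (use \<beta> in simp)
        also have "\<dots> = real n powr (- \<beta>) * (a * g / 2) powr (- \<beta>)" by (rule powr_mult)
        finally have "real n powr \<beta> * u t n \<le> real n powr \<beta> * (real n powr (- \<beta>) * (a * g / 2) powr (- \<beta>))"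
          by (rule mult_left_mono) simp
        also have "\<dots> = (real n powr \<beta> * real n powr (- \<beta>)) * (a * g / 2) powr (- \<beta>)" by simp
        also have "real n powr \<beta> * real n powr (- \<beta>) = 1" using np by (simp add: powr_add[symmetric])
        finally show ?thesis by (simp add: C_def)
      qed
    qed
    then show ?thesis using nn by simp
  qed
  show "\<exists>C. \<forall>L t. t \<in> {-1..1} \<longrightarrow> \<bar>real L powr (1 / (\<rho> - 1)) * (1 - (K ^^ L) t)\<bar> \<le> C"
    using bound by (auto simp: u_def \<beta>_def g_def)
  show "\<forall>t\<in>{-1..1}. convergent (\<lambda>L. real L powr (1 / (\<rho> - 1)) * (1 - (K ^^ L) t))"
  proof
    fix t :: real assume t: "t \<in> {-1..1}"
    have "convergent (\<lambda>n. real n powr \<beta> * u t n)"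
    proof (cases "\<exists>N. u t N = 0")
      case True
      then obtain N where N: "u t N = 0" by auto
      have "u t n = 0" if "N \<le> n" for n
        using that
      proof (induction n rule: dec_induct)
        case base then show ?case by (rule N)
      next
        case (step n) then show ?case using u_dec[OF t, of n] u_nn[OF t, of "Suc n"] by simp
      qed
      then have "eventually (\<lambda>n. real n powr \<beta> * u t n = 0) sequentially"
        unfolding eventually_sequentially by auto
      then have "(\<lambda>n. real n powr \<beta> * u t n) \<longlonglongrightarrow> 0" by (rule tendsto_eventually)
      then show ?thesis by (auto simp: convergent_def)
    next
      case False
      then have up: "0 < u t n" for n using u_nn[OF t, of n] by (simp add: order_le_less)
      have lim0: "(\<lambda>n. C * real n powr (- \<beta>)) \<longlonglongrightarrow> C * 0"
        by (intro tendsto_intros tendsto_neg_powr filterlim_real_sequentially) (use \<beta> in simp)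
      have "eventually (\<lambda>n. u t n \<le> C * real n powr (- \<beta>)) sequentially"
        using eventually_gt_at_top[of 0]
      proof eventually_elim
        case (elim n)
        have np: "0 < real n powr \<beta>" using elim by simp
        have "real n powr \<beta> * u t n \<le> C" using bound[OF t, of n] by simp
        then have "u t n \<le> C / real n powr \<beta>" using np by (simp add: field_simps)
        then show ?case by (simp add: powr_minus divide_inverse)
      qed
      note ev2 = this
      have ev1: "eventually (\<lambda>n. 0 \<le> u t n) sequentially"
        by (rule always_eventually) (use u_nn[OF t] in auto)
      have lim0': "(\<lambda>n. C * real n powr (- \<beta>)) \<longlonglongrightarrow> 0" using lim0 by simp
      have u0: "u t \<longlonglongrightarrow> 0"
        by (rule tendsto_sandwich[OF ev1 ev2 tendsto_const lim0'])
      define s where "s n = (K ^^ n) t" for n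
      have seq: "s = (\<lambda>n. 1 - u t n)" by (simp add: s_def u_def fun_eq_iff)
      have sl: "s \<longlonglongrightarrow> 1"
        unfolding seq using tendsto_diff[OF tendsto_const[of 1] u0] by simp
      have slt: "eventually (\<lambda>n. s n < 1) sequentially"
        by (rule always_eventually) (use up in \<open>simp add: seq\<close>)
      have fs: "filterlim s (at_left 1) sequentially"
        by (rule tendsto_imp_filterlim_at_left[OF sl slt])
      have Eo: "(\<lambda>n. E (s n) / (1 - s n) powr \<rho>) \<longlonglongrightarrow> 0"
        by (rule filterlim_compose[OF smalloD_tendsto[OF o'] fs])
      have "(\<lambda>n. real n powr (1 / (\<rho> - 1)) * u t n) \<longlonglongrightarrow> (c * (\<rho> - 1)) powr (- (1 / (\<rho> - 1)))"
      proof (rule critlim[OF up u0 _ _ cpos r])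
        show "u t (Suc n) = u t n - c * u t n powr \<rho> + E (s n)" for n
          by (simp add: uS E_def s_def u_def)
        show "(\<lambda>n. E (s n) / u t n powr \<rho>) \<longlonglongrightarrow> 0"
          using Eo by (simp add: s_def u_def)
      qed
      then show ?thesis by (auto simp: convergent_def \<beta>_def g_def)
    qed
    then show "convergent (\<lambda>L. real L powr (1 / (\<rho> - 1)) * (1 - (K ^^ L) t))"
      by (simp add: u_def \<beta>_def g_def)
  qed
qed



lemma wgt_nn: "0 \<le> wgt d t" by (simp add: wgt_def)

lemma wgt_meas: "wgt d \<in> borel_measurable (lebesgue_on S)"
proof -
  have "wgt d \<in> borel_measurable borel" unfolding wgt_def by measurable
  then show ?thesis by (intro measurable_restrict_space1 measurable_completion) simp
qed

lemma wgt_int: assumes d: "1 \<le> d" shows "wgt d integrable_on {-1..1}"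
proof (cases "d = 1")
  case True
  have "(wgt 1 has_integral (arcsin 1 - arcsin (-1))) {-1..1}"
  proof (rule fundamental_theorem_of_calculus_interior)
    show "continuous_on {-1..1} arcsin" by (rule continuous_on_arcsin')
    fix x :: real assume x: "x \<in> {-1<..<1}"
    then have x2: "0 < 1 - x\<^sup>2" by (simp add: abs_square_less_1 abs_less_iff)
    have "(arcsin has_real_derivative inverse (sqrt (1 - x\<^sup>2))) (at x)"
      by (rule DERIV_arcsin) (use x in auto)
    moreover have "inverse (sqrt (1 - x\<^sup>2)) = wgt 1 x"
    proof -
      have "wgt 1 x = (1 - x\<^sup>2) powr (- (1/2))" by (simp add: wgt_def)
      also have "\<dots> = inverse ((1 - x\<^sup>2) powr (1/2))" by (rule powr_minus)
      also have "\<dots> = inverse (sqrt (1 - x\<^sup>2))" using x2 by (simp add: powr_half_sqrt)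
      finally show ?thesis by simp
    qed
    ultimately show "(arcsin has_vector_derivative wgt 1 x) (at x)"
      by (simp add: has_real_derivative_iff_has_vector_derivative)
  qed simp
  then show ?thesis using True by blast
next
  case False
  then have d2: "2 \<le> d" using d by simp
  show ?thesis
  proof (rule measurable_bounded_by_integrable_imp_integrable[OF wgt_meas])
    show "(\<lambda>x::real. 1::real) integrable_on {-1..1}" using integrable_const[of "1::real" "-1::real" 1] by (simp add: box_real)
    fix x :: real assume x: "x \<in> {-1..1}"
    have "\<bar>x\<bar> \<le> 1" using x by auto
    then have "x\<^sup>2 \<le> 1" by (simp add: abs_square_le_1)
    then have "wgt d x \<le> 1" unfolding wgt_def
      by (intro powr_le1) (use d2 in auto)
    then show "norm (wgt d x) \<le> 1" using wgt_nn[of d x] by simp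
  qed simp
qed



lemma iter_cont:
  fixes K :: "real \<Rightarrow> real"
  assumes Kc: "continuous_on {-1..1} K" and Kb: "\<And>s. s \<in> {-1..1} \<Longrightarrow> \<bar>K s\<bar> \<le> 1"
  shows "continuous_on {-1..1} (K ^^ n)"
proof (induction n)
  case 0 then show ?case by (simp add: continuous_on_id)
next
  case (Suc n)
  have "(K ^^ n) ` {-1..1} \<subseteq> {-1..1}" using iter_range[OF Kb] by auto
  then have "continuous_on ((K ^^ n) ` {-1..1}) K" by (rule continuous_on_subset[OF Kc])
  then show ?case using continuous_on_compose[OF Suc] by simp
qed

lemma final:
  fixes x :: "nat \<Rightarrow> real \<Rightarrow> real"
  assumes d: "1 \<le> d" and C: "\<And>L t. t \<in> {-1..1} \<Longrightarrow> \<bar>x L t\<bar> \<le> C"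
    and conv: "\<And>t. t \<in> {-1..1} \<Longrightarrow> convergent (\<lambda>L. x L t)"
    and cont: "\<And>L. continuous_on {-1..1} (x L)"
  shows "(\<lambda>t. lim (\<lambda>L. x L t) * wgt d t) integrable_on {-1..1} \<and>
    (\<lambda>L. integral {-1..1} (\<lambda>t. x L t * wgt d t) / integral {-1..1} (wgt d))
      \<longlonglongrightarrow> integral {-1..1} (\<lambda>t. lim (\<lambda>L. x L t) * wgt d t) / integral {-1..1} (wgt d)"
proof -
  have wI: "wgt d integrable_on {-1..1}" by (rule wgt_int[OF d])
  have hI: "(\<lambda>t. C * wgt d t) integrable_on {-1..1}"
    using integrable_on_cmult_left[OF wI, of C] by simp
  have S: "{-1..1::real} \<in> sets lebesgue" by simp
  have fI: "(\<lambda>t. x L t * wgt d t) integrable_on {-1..1}" for L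
  proof (rule measurable_bounded_by_integrable_imp_integrable[OF _ hI _ S])
    show "(\<lambda>t. x L t * wgt d t) \<in> borel_measurable (lebesgue_on {-1..1})"
      by (rule borel_measurable_times[OF continuous_imp_measurable_on_sets_lebesgue[OF cont S] wgt_meas])
    fix t :: real assume t: "t \<in> {-1..1}"
    show "norm (x L t * wgt d t) \<le> C * wgt d t"
      using C[OF t, of L] wgt_nn[of d t] by (simp add: abs_mult mult_right_mono)
  qed
  have le: "norm (x L t * wgt d t) \<le> C * wgt d t" if "t \<in> {-1..1}" for L t
    using C[OF that, of L] wgt_nn[of d t] by (simp add: abs_mult mult_right_mono)
  have cv: "(\<lambda>L. x L t * wgt d t) \<longlonglongrightarrow> lim (\<lambda>L. x L t) * wgt d t" if "t \<in> {-1..1}" for t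
    using conv[OF that] by (intro tendsto_mult_right) (simp add: convergent_LIMSEQ_iff)
  note DC = dominated_convergence[of "\<lambda>L t. x L t * wgt d t" "{-1..1}" "\<lambda>t. C * wgt d t"
      "\<lambda>t. lim (\<lambda>L. x L t) * wgt d t", OF fI hI le cv]
  show ?thesis
  proof
    show "(\<lambda>t. lim (\<lambda>L. x L t) * wgt d t) integrable_on {-1..1}" by (rule DC(1))
    show "(\<lambda>L. integral {-1..1} (\<lambda>t. x L t * wgt d t) / integral {-1..1} (wgt d))
      \<longlonglongrightarrow> integral {-1..1} (\<lambda>t. lim (\<lambda>L. x L t) * wgt d t) / integral {-1..1} (wgt d)"
      using tendsto_mult_right[OF DC(2), of "inverse (integral {-1..1} (wgt d))"]
      by (simp add: divide_inverse)
  qed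
qed



theorem lemmaA1:
  fixes d :: nat and J :: "nat \<Rightarrow> real" and k1 c \<rho> :: real
  assumes d: "d \<ge> 1"
    and inf: "infinite {q. J q \<noteq> 0}"
    and summ: "summable (\<lambda>q. \<bar>J (Suc q)\<bar> / fact q)"
    and norm: "kappa J 1 = 1"
    and deriv1: "(kappa J has_real_derivative k1) (at 1 within {-1..1})"
    and k1le: "k1 \<le> 1"
    and crit: "k1 = 1 \<Longrightarrow> c \<noteq> 0 \<and> \<rho> > 1 \<and>
       (\<lambda>t. (1 - kappa J t) - (k1 * (1 - t) - c * (1 - t) powr \<rho>))
         \<in> o[at_left 1](\<lambda>t. (1 - t) powr \<rho>)"
  defines "v \<equiv> (\<lambda>L::nat. if k1 < 1 then inverse (k1 ^ L) else real L powr (1 / (\<rho> - 1)))"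
    and "g \<equiv> (\<lambda>t. lim (\<lambda>L::nat. (if k1 < 1 then inverse (k1 ^ L) else real L powr (1 / (\<rho> - 1))) * (1 - (kappa J ^^ L) t)))"
  shows "(\<lambda>t. g t * wgt d t) integrable_on {-1..1} \<and>
    (\<lambda>L. integral {-1..1} (\<lambda>t. v L * (1 - (kappa J ^^ L) t) * wgt d t) / integral {-1..1} (wgt d))
      \<longlonglongrightarrow> integral {-1..1} (\<lambda>t. g t * wgt d t) / integral {-1..1} (wgt d)"
proof -
  define a where "a q = (J q)\<^sup>2 / fact q" for q
  have a0: "\<And>q. 0 \<le> a q" by (simp add: a_def)
  have Kdef: "\<And>t. kappa J t = (\<Sum>q. a q * t ^ q)" by (simp add: kappa_def a_def)
  define x where "x L t = (if k1 < 1 then inverse (k1 ^ L) else real L powr (1 / (\<rho> - 1))) * (1 - (kappa J ^^ L) t)" for L t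
  have key: "\<exists>C. (\<forall>L t. t \<in> {-1..1} \<longrightarrow> \<bar>x L t\<bar> \<le> C) \<and> (\<forall>t\<in>{-1..1}. convergent (\<lambda>L. x L t))
      \<and> (\<forall>L. continuous_on {-1..1} (x L))"
  proof (cases "k1 = 0")
    case True
    then have x0: "x L = (\<lambda>t. if L = 0 then 1 - t else 0)" for L by (cases L) (simp_all add: x_def fun_eq_iff)
    show ?thesis
    proof (intro exI[of _ 2] conjI allI ballI impI)
      fix L and t :: real assume "t \<in> {-1..1}"
      then show "\<bar>x L t\<bar> \<le> 2" by (auto simp: x0)
    next
      fix t :: real
      have "eventually (\<lambda>L. x L t = 0) sequentially"
        using eventually_gt_at_top[of 0] by eventually_elim (simp add: x0)
      then have "(\<lambda>L. x L t) \<longlonglongrightarrow> 0" by (rule tendsto_eventually)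
      then show "convergent (\<lambda>L. x L t)" by (auto simp: convergent_def)
    next
      fix L
      show "continuous_on {-1..1} (x L)"
        by (cases "L = 0") (auto simp: x0 intro!: continuous_intros)
    qed
  next
    case False
    have sa: "summable a" by (rule summable_from_deriv[OF a0 Kdef norm deriv1 False])
    have s1: "suminf a = 1" using norm Kdef[of 1] by simp
    interpret ser a "kappa J" by unfold_locales (rule a0 sa s1 Kdef)+
    have Kb: "\<And>s. s \<in> {-1..1} \<Longrightarrow> \<bar>kappa J s\<bar> \<le> 1" by (rule Kabs)
    have Kl: "\<And>s. s \<in> {-1..1} \<Longrightarrow> 1 - kappa J s \<le> k1 * (1 - s)" by (rule Kle[OF norm deriv1])
    have k0: "0 \<le> k1" using Kl[of 0] Kb[of 0] by auto
    have xc: "continuous_on {-1..1} (x L)" for L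
      unfolding x_def[abs_def]
      by (intro continuous_intros iter_cont[OF Kcont Kb])
    show ?thesis
    proof (cases "k1 < 1")
      case True
      show ?thesis
      proof (intro exI[of _ 2] conjI allI ballI impI)
        fix L and t :: real assume t: "t \<in> {-1..1}"
        show "\<bar>x L t\<bar> \<le> 2" using subcrit(1,2)[OF Kb Kl k0 t, of L] True by (simp add: x_def)
      next
        fix t :: real assume t: "t \<in> {-1..1}"
        show "convergent (\<lambda>L. x L t)" using subcrit(3)[OF Kb Kl k0 t] True by (simp add: x_def)
      next
        fix L show "continuous_on {-1..1} (x L)" by (rule xc)
      qed
    next
      case False
      then have k1: "k1 = 1" using k1le by simp
      have cr: "c \<noteq> 0" "\<rho> > 1"
        "(\<lambda>t. (1 - kappa J t) - (1 * (1 - t) - c * (1 - t) powr \<rho>)) \<in> o[at_left 1](\<lambda>t. (1 - t) powr \<rho>)"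
        using crit[OF k1] unfolding k1 by auto
      have Kl1: "\<And>s. s \<in> {-1..1} \<Longrightarrow> 1 - kappa J s \<le> 1 * (1 - s)" using Kl k1 by simp
      note CR = crit_main[OF Kb Kl1 Kmono Ktwo cr]
      obtain C where C: "\<forall>L t. t \<in> {-1..1} \<longrightarrow> \<bar>real L powr (1 / (\<rho> - 1)) * (1 - (kappa J ^^ L) t)\<bar> \<le> C"
        using CR(1) by blast
      show ?thesis
      proof (intro exI[of _ C] conjI allI ballI impI)
        fix L and t :: real assume t: "t \<in> {-1..1}"
        show "\<bar>x L t\<bar> \<le> C" using C t False by (simp add: x_def)
      next
        fix t :: real assume t: "t \<in> {-1..1}"
        show "convergent (\<lambda>L. x L t)" using CR(2) t False by (simp add: x_def)
      next
        fix L show "continuous_on {-1..1} (x L)" by (rule xc)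
      qed
    qed
  qed
  then obtain C where C: "\<And>L t. t \<in> {-1..1} \<Longrightarrow> \<bar>x L t\<bar> \<le> C"
    and conv: "\<And>t. t \<in> {-1..1} \<Longrightarrow> convergent (\<lambda>L. x L t)"
    and cont: "\<And>L. continuous_on {-1..1} (x L)" by blast
  show ?thesis
    unfolding v_def g_def using final[OF d C conv cont] unfolding x_def .
qed


end
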